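(* Let $\alpha$ be a nonzero real number and let $\gamma(t)=\Psi(u(t),v(t))$ be a regular curve in $\mathbb S^2$ not passing through $N$. Then $\gamma$ is an $\alpha$-stationary curve if and only if its curvature satisfies $$\kappa=\alpha\,\frac{\langle\mathbf n,\xi\rangle}{\mathsf d}.$$ Here $\mathbf n$ is the unit normal of $\gamma$, $\mathsf d$ is the spherical distance from $\gamma(t)$ to $N$, and $\xi$ is the unit tangent vector at $\gamma(t)$ of the minimizing geodesic joining $N$ and $\gamma(t)$.
   Context: $\mathbb S^2\subset\mathbb R^3$ is the unit sphere with the Euclidean inner product $\langle,\rangle$. It is parametrized by $\Psi(u,v)=(\sin u\cos v,\sin u\sin v,\cos u)$, and $N=(0,0,1)$. The spherical distance from $\Psi(u,v)$, $u\in[0,\pi]$, to $N$ is $u$. For $p=\Psi(u,v)$ with $0<u<\pi$, set $\xi(p)=\Psi_u(u,v)=(\cos u\cos v,\cos u\sin v,-\sin u)$; this is the unit tangent of the minimizing geodesic from $N$ to $p$, pointing away from $N$. For a regular curve $\gamma(t)=\Psi(u(t),v(t))$, we have $|\gamma'|=\sqrt{u'^2+\sin^2(u)v'^2}$. Its unit normal is $\mathbf n=(\gamma'\times\gamma)/|\gamma'|$, with $\times$ the Euclidean cross product. Its curvature is $$\kappa=\frac{\langle\gamma'',\mathbf n\rangle}{|\gamma'|^2}=\frac{\det(\gamma'',\gamma',\gamma)}{|\gamma'|^3}.$$ The energy is $$E_\alpha[\gamma]=\int_\gamma\mathsf d^\alpha ds=\int u^\alpha\sqrt{u'^2+\sin^2(u)v'^2}\,dt.$$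 The curve is $\alpha$-stationary if it is a critical point of $E_\alpha$, i.e. $(u,v)$ satisfies its Euler–Lagrange equations. Throughout the paper, $\alpha\neq0$ and curves avoid $N$. *)

theory Defs
  imports "HOL-Analysis.Analysis"
begin

definition Psi :: "real \<Rightarrow> real \<Rightarrow> real^3" where
  "Psi u v = vector [sin u * cos v, sin u * sin v, cos u]"

text \<open>xi at Psi(u,v): the partial derivative Psi_u, unit tangent of the geodesic from N.\<close>
definition xi_coord :: "real \<Rightarrow> real \<Rightarrow> real^3" where
  "xi_coord u v = vector [cos u * cos v, cos u * sin v, - sin u]"

definition curve :: "(real \<Rightarrow> real) \<Rightarrow> (real \<Rightarrow> real) \<Rightarrow> real \<Rightarrow> real^3" where
  "curve u v t = Psi (u t) (v t)"

definition vel :: "(real \<Rightarrow> real) \<Rightarrow> (real \<Rightarrow> real) \<Rightarrow> real \<Rightarrow> real^3" where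
  "vel u v t = vector_derivative (curve u v) (at t)"

definition acc :: "(real \<Rightarrow> real) \<Rightarrow> (real \<Rightarrow> real) \<Rightarrow> real \<Rightarrow> real^3" where
  "acc u v t = vector_derivative (vel u v) (at t)"

definition unit_normal :: "(real \<Rightarrow> real) \<Rightarrow> (real \<Rightarrow> real) \<Rightarrow> real \<Rightarrow> real^3" where
  "unit_normal u v t = (1 / norm (vel u v t)) *\<^sub>R cross3 (vel u v t) (curve u v t)"

definition curvature :: "(real \<Rightarrow> real) \<Rightarrow> (real \<Rightarrow> real) \<Rightarrow> real \<Rightarrow> real" where
  "curvature u v t = (acc u v t \<bullet> unit_normal u v t) / (norm (vel u v t))\<^sup>2"

definition speed :: "(real \<Rightarrow> real) \<Rightarrow> (real \<Rightarrow> real) \<Rightarrow> real \<Rightarrow> real" where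
  "speed u v t = sqrt ((deriv u t)\<^sup>2 + (sin (u t))\<^sup>2 * (deriv v t)\<^sup>2)"

text \<open>Euler--Lagrange equations of L = u^alpha * sqrt(u'^2 + sin^2(u) v'^2) on the open set I:
  d/dt (dL/du') = dL/du  and  d/dt (dL/dv') = dL/dv = 0.\<close>
definition alpha_stationary ::
  "real \<Rightarrow> (real \<Rightarrow> real) \<Rightarrow> (real \<Rightarrow> real) \<Rightarrow> real set \<Rightarrow> bool" where
  "alpha_stationary \<alpha> u v I \<longleftrightarrow>
     (\<forall>t\<in>I.
        ((\<lambda>s. u s powr \<alpha> * deriv u s / speed u v s) has_real_derivative
            (\<alpha> * u t powr (\<alpha> - 1) * speed u v t
             + u t powr \<alpha> * sin (u t) * cos (u t) * (deriv v t)\<^sup>2 / speed u v t)) (at t)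
      \<and> ((\<lambda>s. u s powr \<alpha> * (sin (u s))\<^sup>2 * deriv v s / speed u v s) has_real_derivative 0) (at t))"

end

theory Submission
  imports Defs
begin


lemma vec3_deriv:
  assumes "(f1 has_real_derivative d1) (at t)" "(f2 has_real_derivative d2) (at t)"
          "(f3 has_real_derivative d3) (at t)"
  shows "((\<lambda>s. vector [f1 s, f2 s, f3 s] :: real^3) has_vector_derivative vector [d1, d2, d3]) (at t)"
proof -
  let ?E1 = "vector [1,0,0] :: real^3" and ?E2 = "vector [0,1,0] :: real^3" and ?E3 = "vector [0,0,1] :: real^3"
  have e: "\<And>x y z. (vector [x,y,z] :: real^3) = x *\<^sub>R ?E1 + y *\<^sub>R ?E2 + z *\<^sub>R ?E3"
    by (simp add: vec_eq_iff forall_3 vector_3)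
  have d: "((\<lambda>s. f1 s *\<^sub>R ?E1 + f2 s *\<^sub>R ?E2 + f3 s *\<^sub>R ?E3) has_vector_derivative
     d1 *\<^sub>R ?E1 + d2 *\<^sub>R ?E2 + d3 *\<^sub>R ?E3) (at t)"
    using has_vector_derivative_add[OF has_vector_derivative_add[OF
      has_vector_derivative_scaleR[OF assms(1) has_vector_derivative_const, of ?E1]
      has_vector_derivative_scaleR[OF assms(2) has_vector_derivative_const, of ?E2]]
      has_vector_derivative_scaleR[OF assms(3) has_vector_derivative_const, of ?E3]]
    unfolding scaleR_zero_right add_0_left .
  have h1: "(\<lambda>s. vector [f1 s, f2 s, f3 s] :: real^3) = (\<lambda>s. f1 s *\<^sub>R ?E1 + f2 s *\<^sub>R ?E2 + f3 s *\<^sub>R ?E3)"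
    by (rule ext, rule e)
  have h2: "(vector [d1, d2, d3] :: real^3) = d1 *\<^sub>R ?E1 + d2 *\<^sub>R ?E2 + d3 *\<^sub>R ?E3"
    by (rule e)
  show ?thesis unfolding h1 h2 by (rule d)
qed

lemma speed_deriv:
  assumes "(u has_real_derivative a) (at t)" "(v has_real_derivative b) (at t)"
    "(du has_real_derivative a2) (at t)" "(dv has_real_derivative b2) (at t)"
    "du t = a" "dv t = b"
    "S = sqrt (a\<^sup>2 + (sin (u t))\<^sup>2 * b\<^sup>2)" "S > 0"
  shows "((\<lambda>s. sqrt ((du s)\<^sup>2 + (sin (u s))\<^sup>2 * (dv s)\<^sup>2)) has_real_derivative
     (a*a2 + sin (u t) * cos (u t) * a * b\<^sup>2 + (sin (u t))\<^sup>2 * b * b2) / S) (at t)"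
proof -
  have q: "(a\<^sup>2 + (sin (u t))\<^sup>2 * b\<^sup>2) > 0" using assms(7,8) by (metis real_sqrt_gt_0_iff)
  have dd: "((\<lambda>s. (du s)\<^sup>2 + (sin (u s))\<^sup>2 * (dv s)\<^sup>2) has_real_derivative
     2*a*a2 + 2 * sin (u t) * cos (u t) * a * b\<^sup>2 + 2*(sin (u t))\<^sup>2 * b * b2) (at t)"
    using assms(1-6) by (auto intro!: derivative_eq_intros simp: power2_eq_square algebra_simps)
  have q': "(du t)\<^sup>2 + (sin (u t))\<^sup>2 * (dv t)\<^sup>2 > 0" using q assms(5,6) by simp
  from DERIV_chain2[OF DERIV_real_sqrt[OF q'] dd] show ?thesis
  proof (rule DERIV_cong)
    show "inverse (sqrt ((du t)\<^sup>2 + (sin (u t))\<^sup>2 * (dv t)\<^sup>2)) / 2 *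
      (2 * a * a2 + 2 * sin (u t) * cos (u t) * a * b\<^sup>2 + 2 * (sin (u t))\<^sup>2 * b * b2) =
      (a*a2 + sin (u t) * cos (u t) * a * b\<^sup>2 + (sin (u t))\<^sup>2 * b * b2) / S"
      using assms(5-8) by (simp add: field_simps)
  qed
qed


lemma alg_main:
  fixes x s c a b a2 b2 p S al D1 D2 :: real
  assumes x: "x > 0" and s: "s > 0" and p: "p > 0" and S: "S > 0" and SS: "S\<^sup>2 = a\<^sup>2 + s\<^sup>2 * b\<^sup>2"
    and D1: "D1 = ((al * (p / x) * a) * a + p * a2) / S - p * a * ((a*a2 + s*c*a*b\<^sup>2 + s\<^sup>2*b*b2)/S) / S\<^sup>2"
    and D2: "D2 = ((al * (p / x) * a) * s\<^sup>2 * b + p * (2 * s * c * a) * b + p * s\<^sup>2 * b2) / S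
                 - p * s\<^sup>2 * b * ((a*a2 + s*c*a*b\<^sup>2 + s\<^sup>2*b*b2)/S) / S\<^sup>2"
  shows "(D1 = al * (p / x) * S + p * s * c * b\<^sup>2 / S \<and> D2 = 0) \<longleftrightarrow>
         (b* s*a2 - s\<^sup>2*c*b^3 - 2*a\<^sup>2*b*c - a* s*b2) / S^3 = al * (b* s/S) / x"
proof -
  define G where "G = s*(b* s*a2 - s\<^sup>2*c*b^3 - 2*a\<^sup>2*b*c - a* s*b2) - al* s\<^sup>2*b*S\<^sup>2/x"
  have S3: "S^3 = S * S\<^sup>2" by (simp add: power2_eq_square power3_eq_cube)
  have e1: "S^3 * (D1 - (al * (p / x) * S + p * s * c * b\<^sup>2 / S)) = p * b * G"
  proof -
    have "S^3 * (D1 - (al * (p / x) * S + p * s * c * b\<^sup>2 / S)) =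
       S\<^sup>2 * ((al * (p / x) * a) * a + p * a2) - p * a * (a*a2 + s*c*a*b\<^sup>2 + s\<^sup>2*b*b2)
       - al * (p / x) * S\<^sup>2 * S\<^sup>2 - p * s * c * b\<^sup>2 * S\<^sup>2"
      unfolding D1 S3 using S by (simp add: field_simps power2_eq_square)
    also have "\<dots> = p * b * G" unfolding SS G_def using x by (simp add: field_simps power2_eq_square power3_eq_cube)
    finally show ?thesis .
  qed
  have e2: "S^3 * D2 = - p * a * G"
  proof -
    have "S^3 * D2 =
       S\<^sup>2 * ((al * (p / x) * a) * s\<^sup>2 * b + p * (2 * s * c * a) * b + p * s\<^sup>2 * b2) - p * s\<^sup>2 * b * (a*a2 + s*c*a*b\<^sup>2 + s\<^sup>2*b*b2)"
      unfolding D2 S3 using S by (simp add: field_simps power2_eq_square)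
    also have "\<dots> = - p * a * G" unfolding SS G_def using x by (simp add: field_simps power2_eq_square power3_eq_cube)
    finally show ?thesis .
  qed
  have ab: "a \<noteq> 0 \<or> b \<noteq> 0" using SS S by auto
  define dt where "dt = b * s * a2 - s\<^sup>2 * c * b^3 - 2 * a\<^sup>2 * b * c - a * s * b2"
  have g: "G = (s / x) * (dt * x - al * b * s * S\<^sup>2)" unfolding G_def dt_def using x by (simp add: field_simps power2_eq_square)
  have h: "dt / S^3 - al * (b * s / S) / x = (dt * x - al * b * s * S\<^sup>2) / (S^3 * x)"
    using x S by (simp add: field_simps power2_eq_square power3_eq_cube)
  have C: "((b * s * a2 - s\<^sup>2 * c * b^3 - 2 * a\<^sup>2 * b * c - a * s * b2) / S^3 = al * (b * s / S) / x) \<longleftrightarrow> G = 0"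
    unfolding dt_def[symmetric] using h g x s S
    by (metis divide_eq_0_iff divide_pos_pos eq_iff_diff_eq_0 less_irrefl mult_eq_0_iff mult_pos_pos zero_less_power)
  have "(D1 = al * (p / x) * S + p * s * c * b\<^sup>2 / S \<and> D2 = 0) \<longleftrightarrow> (p*b*G = 0 \<and> p*a*G = 0)"
    using e1 e2 S by (metis (no_types, lifting) diff_eq_eq mult_eq_0_iff zero_less_power less_irrefl add.left_neutral neg_equal_0_iff_equal mult_minus_left)
  also have "\<dots> \<longleftrightarrow> G = 0" using p ab by auto
  finally show ?thesis using C by simp
qed


lemma alg_vec:
  fixes x y a b a2 b2 :: real
  defines "V \<equiv> vector [cos x * a * cos y - sin x * sin y * b, cos x * a * sin y + sin x * cos y * b, - sin x * a] :: real^3"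
    and "A \<equiv> vector [- sin x * a\<^sup>2 * cos y + cos x * cos y * a2 - 2 * cos x * sin y * a * b - sin x * cos y * b\<^sup>2 - sin x * sin y * b2,
                      - sin x * sin y * a\<^sup>2 + cos x * sin y * a2 + 2 * cos x * cos y * a * b - sin x * sin y * b\<^sup>2 + sin x * cos y * b2,
                      - cos x * a\<^sup>2 - sin x * a2] :: real^3"
  shows "V \<bullet> V = a\<^sup>2 + (sin x)\<^sup>2 * b\<^sup>2"
    and "A \<bullet> cross3 V (Psi x y) = b * sin x * a2 - (sin x)\<^sup>2 * cos x * b^3 - 2 * a\<^sup>2 * b * cos x - a * sin x * b2"
    and "cross3 V (Psi x y) \<bullet> xi_coord x y = b * sin x"
proof -
  have sx: "(sin x)\<^sup>2 + (cos x)\<^sup>2 = 1" and sy: "(sin y)\<^sup>2 + (cos y)\<^sup>2 = 1" by simp_all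
  show "V \<bullet> V = a\<^sup>2 + (sin x)\<^sup>2 * b\<^sup>2"
    unfolding V_def inner_vec_def sum_3 vector_3 inner_real_def using sx sy by algebra
  show "A \<bullet> cross3 V (Psi x y) = b * sin x * a2 - (sin x)\<^sup>2 * cos x * b^3 - 2 * a\<^sup>2 * b * cos x - a * sin x * b2"
    unfolding A_def V_def Psi_def cross3_def inner_vec_def sum_3 vector_3 inner_real_def using sx sy by algebra
  show "cross3 V (Psi x y) \<bullet> xi_coord x y = b * sin x"
    unfolding xi_coord_def V_def Psi_def cross3_def inner_vec_def sum_3 vector_3 inner_real_def using sx sy by algebra
qed

theorem proposition3p1:
  fixes \<alpha> :: real and u v :: "real \<Rightarrow> real" and I :: "real set"
  assumes "\<alpha> \<noteq> 0"
    and "open I" and "is_interval I" and "I \<noteq> {}"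
    and "\<forall>t\<in>I. u differentiable (at t) \<and> v differentiable (at t)"
    and "\<forall>t\<in>I. deriv u differentiable (at t) \<and> deriv v differentiable (at t)"
    and "\<forall>t\<in>I. 0 < u t \<and> u t < pi"
    and "\<forall>t\<in>I. speed u v t > 0"
  shows "alpha_stationary \<alpha> u v I \<longleftrightarrow>
    (\<forall>t\<in>I. curvature u v t = \<alpha> * (unit_normal u v t \<bullet> xi_coord (u t) (v t)) / u t)"
proof -
  have du: "\<And>s. s \<in> I \<Longrightarrow> (u has_real_derivative deriv u s) (at s)"
    using assms(5) DERIV_deriv_iff_real_differentiable by blast
  have dv: "\<And>s. s \<in> I \<Longrightarrow> (v has_real_derivative deriv v s) (at s)"
    using assms(5) DERIV_deriv_iff_real_differentiable by blast
  have ddu: "\<And>s. s \<in> I \<Longrightarrow> (deriv u has_real_derivative deriv (deriv u) s) (at s)"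
    using assms(6) DERIV_deriv_iff_real_differentiable by blast
  have ddv: "\<And>s. s \<in> I \<Longrightarrow> (deriv v has_real_derivative deriv (deriv v) s) (at s)"
    using assms(6) DERIV_deriv_iff_real_differentiable by blast
  define V where "V = (\<lambda>s. vector [cos (u s) * deriv u s * cos (v s) - sin (u s) * sin (v s) * deriv v s,
      cos (u s) * deriv u s * sin (v s) + sin (u s) * cos (v s) * deriv v s, - sin (u s) * deriv u s] :: real^3)"
  have velI: "vel u v s = V s" if s: "s \<in> I" for s
  proof -
    have "(curve u v has_vector_derivative V s) (at s)"
      unfolding curve_def Psi_def V_def
      by (rule vec3_deriv) (auto intro!: derivative_eq_intros du[OF s] dv[OF s] simp: algebra_simps)
    then show ?thesis unfolding vel_def by (rule vector_derivative_at)
  qed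
  have key: "(((\<lambda>s. u s powr \<alpha> * deriv u s / speed u v s) has_real_derivative
            (\<alpha> * u t powr (\<alpha> - 1) * speed u v t
             + u t powr \<alpha> * sin (u t) * cos (u t) * (deriv v t)\<^sup>2 / speed u v t)) (at t)
      \<and> ((\<lambda>s. u s powr \<alpha> * (sin (u s))\<^sup>2 * deriv v s / speed u v s) has_real_derivative 0) (at t))
      \<longleftrightarrow> curvature u v t = \<alpha> * (unit_normal u v t \<bullet> xi_coord (u t) (v t)) / u t"
    if t: "t \<in> I" for t
  proof -
    define x where "x = u t"
    define a where "a = deriv u t"
    define b where "b = deriv v t"
    define a2 where "a2 = deriv (deriv u) t"
    define b2 where "b2 = deriv (deriv v) t"
    define S where "S = speed u v t"
    define p where "p = u t powr \<alpha>"
    have x: "x > 0" "sin x > 0" using assms(7) t unfolding x_def by (auto intro: sin_gt_zero)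
    have S: "S > 0" using assms(8) t unfolding S_def by auto
    have Sdef: "S = sqrt (a\<^sup>2 + (sin (u t))\<^sup>2 * b\<^sup>2)" unfolding S_def speed_def a_def b_def ..
    have SS: "S\<^sup>2 = a\<^sup>2 + (sin x)\<^sup>2 * b\<^sup>2" unfolding Sdef x_def by simp
    have p: "p > 0" using x unfolding p_def x_def by simp
    have pm: "u t powr (\<alpha> - 1) = p / x" unfolding p_def x_def using x(1) unfolding x_def
      by (simp add: powr_diff)
    have spf: "speed u v = (\<lambda>s. sqrt ((deriv u s)\<^sup>2 + (sin (u s))\<^sup>2 * (deriv v s)\<^sup>2))"
      by (simp add: speed_def fun_eq_iff)
    have dS: "(speed u v has_real_derivative (a*a2 + sin (u t) * cos (u t) * a * b\<^sup>2 + (sin (u t))\<^sup>2 * b * b2) / S) (at t)"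
      unfolding spf by (rule speed_deriv[OF du[OF t, folded a_def] dv[OF t, folded b_def] ddu[OF t, folded a2_def] ddv[OF t, folded b2_def]])
        (simp add: a_def, simp add: b_def, rule Sdef, rule S)
    have dp: "((\<lambda>s. u s powr \<alpha>) has_real_derivative \<alpha> * (p / x) * a) (at t)"
      using DERIV_fun_powr[OF du[OF t], of \<alpha>] assms(7) t pm unfolding a_def by simp
    have ds2: "((\<lambda>s. (sin (u s))\<^sup>2) has_real_derivative 2 * sin x * cos x * a) (at t)"
      unfolding x_def a_def by (auto intro!: derivative_eq_intros du[OF t])
    have D1: "((\<lambda>s. u s powr \<alpha> * deriv u s / speed u v s) has_real_derivative
       ((\<alpha> * (p / x) * a) * a + p * a2) / S - p * a * ((a*a2 + sin x * cos x * a * b\<^sup>2 + (sin x)\<^sup>2 * b * b2)/S) / S\<^sup>2) (at t)"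
    proof -
      have "((\<lambda>s. u s powr \<alpha> * deriv u s / speed u v s) has_real_derivative
         ((\<alpha> * (p / x) * a * deriv u t + a2 * u t powr \<alpha>) * speed u v t - u t powr \<alpha> * deriv u t *
            ((a*a2 + sin (u t) * cos (u t) * a * b\<^sup>2 + (sin (u t))\<^sup>2 * b * b2) / S)) / (speed u v t * speed u v t)) (at t)"
        by (rule DERIV_divide[OF DERIV_mult[OF dp ddu[OF t, folded a2_def]] dS]) (use S S_def in simp)
      then show ?thesis
        apply (rule DERIV_cong)
        apply (unfold p_def x_def a_def[symmetric] b_def[symmetric] S_def[symmetric])
        using S by (simp add: field_simps power2_eq_square)
    qed
    have D2: "((\<lambda>s. u s powr \<alpha> * (sin (u s))\<^sup>2 * deriv v s / speed u v s) has_real_derivative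
       ((\<alpha> * (p / x) * a) * (sin x)\<^sup>2 * b + p * (2 * sin x * cos x * a) * b + p * (sin x)\<^sup>2 * b2) / S
                 - p * (sin x)\<^sup>2 * b * ((a*a2 + sin x * cos x * a * b\<^sup>2 + (sin x)\<^sup>2 * b * b2)/S) / S\<^sup>2) (at t)"
    proof -
      have "((\<lambda>s. u s powr \<alpha> * (sin (u s))\<^sup>2 * deriv v s / speed u v s) has_real_derivative
         (((\<alpha> * (p / x) * a * (sin (u t))\<^sup>2 + 2 * sin x * cos x * a * u t powr \<alpha>) * deriv v t + b2 * (u t powr \<alpha> * (sin (u t))\<^sup>2)) * speed u v t - u t powr \<alpha> * (sin (u t))\<^sup>2 * deriv v t *
            ((a*a2 + sin (u t) * cos (u t) * a * b\<^sup>2 + (sin (u t))\<^sup>2 * b * b2) / S)) / (speed u v t * speed u v t)) (at t)"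
        by (rule DERIV_divide[OF DERIV_mult[OF DERIV_mult[OF dp ds2] ddv[OF t, folded b2_def]] dS]) (use S S_def in simp)
      then show ?thesis
        apply (rule DERIV_cong)
        apply (unfold p_def x_def a_def[symmetric] b_def[symmetric] S_def[symmetric])
        using S by (simp add: field_simps power2_eq_square)
    qed
    have A: "(((\<lambda>s. u s powr \<alpha> * deriv u s / speed u v s) has_real_derivative
            (\<alpha> * u t powr (\<alpha> - 1) * speed u v t
             + u t powr \<alpha> * sin (u t) * cos (u t) * (deriv v t)\<^sup>2 / speed u v t)) (at t))
       \<longleftrightarrow> ((\<alpha> * (p / x) * a) * a + p * a2) / S - p * a * ((a*a2 + sin x * cos x * a * b\<^sup>2 + (sin x)\<^sup>2 * b * b2)/S) / S\<^sup>2
          = \<alpha> * (p / x) * S + p * sin x * cos x * b\<^sup>2 / S"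
    proof -
      have R: "\<alpha> * u t powr (\<alpha> - 1) * speed u v t + u t powr \<alpha> * sin (u t) * cos (u t) * (deriv v t)\<^sup>2 / speed u v t
          = \<alpha> * (p / x) * S + p * sin x * cos x * b\<^sup>2 / S"
        unfolding pm by (simp add: p_def x_def S_def b_def)
      show ?thesis unfolding R
      proof
        assume h: "((\<lambda>s. u s powr \<alpha> * deriv u s / speed u v s) has_real_derivative \<alpha> * (p / x) * S + p * sin x * cos x * b\<^sup>2 / S) (at t)"
        show "((\<alpha> * (p / x) * a) * a + p * a2) / S - p * a * ((a*a2 + sin x * cos x * a * b\<^sup>2 + (sin x)\<^sup>2 * b * b2)/S) / S\<^sup>2
          = \<alpha> * (p / x) * S + p * sin x * cos x * b\<^sup>2 / S" by (rule DERIV_unique[OF D1 h])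
      next
        assume h: "((\<alpha> * (p / x) * a) * a + p * a2) / S - p * a * ((a*a2 + sin x * cos x * a * b\<^sup>2 + (sin x)\<^sup>2 * b * b2)/S) / S\<^sup>2
          = \<alpha> * (p / x) * S + p * sin x * cos x * b\<^sup>2 / S"
        show "((\<lambda>s. u s powr \<alpha> * deriv u s / speed u v s) has_real_derivative \<alpha> * (p / x) * S + p * sin x * cos x * b\<^sup>2 / S) (at t)"
          using D1 unfolding h .
      qed
    qed
    have B: "(((\<lambda>s. u s powr \<alpha> * (sin (u s))\<^sup>2 * deriv v s / speed u v s) has_real_derivative 0) (at t))
       \<longleftrightarrow> ((\<alpha> * (p / x) * a) * (sin x)\<^sup>2 * b + p * (2 * sin x * cos x * a) * b + p * (sin x)\<^sup>2 * b2) / S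
                 - p * (sin x)\<^sup>2 * b * ((a*a2 + sin x * cos x * a * b\<^sup>2 + (sin x)\<^sup>2 * b * b2)/S) / S\<^sup>2 = 0"
    proof
      assume h: "((\<lambda>s. u s powr \<alpha> * (sin (u s))\<^sup>2 * deriv v s / speed u v s) has_real_derivative 0) (at t)"
      show "((\<alpha> * (p / x) * a) * (sin x)\<^sup>2 * b + p * (2 * sin x * cos x * a) * b + p * (sin x)\<^sup>2 * b2) / S
                 - p * (sin x)\<^sup>2 * b * ((a*a2 + sin x * cos x * a * b\<^sup>2 + (sin x)\<^sup>2 * b * b2)/S) / S\<^sup>2 = 0"
        by (rule DERIV_unique[OF D2 h])
    next
      assume h: "((\<alpha> * (p / x) * a) * (sin x)\<^sup>2 * b + p * (2 * sin x * cos x * a) * b + p * (sin x)\<^sup>2 * b2) / S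
                 - p * (sin x)\<^sup>2 * b * ((a*a2 + sin x * cos x * a * b\<^sup>2 + (sin x)\<^sup>2 * b * b2)/S) / S\<^sup>2 = 0"
      show "((\<lambda>s. u s powr \<alpha> * (sin (u s))\<^sup>2 * deriv v s / speed u v s) has_real_derivative 0) (at t)"
        using D2 unfolding h .
    qed
    define Ac where "Ac = (vector [- sin x * a\<^sup>2 * cos (v t) + cos x * cos (v t) * a2 - 2 * cos x * sin (v t) * a * b - sin x * cos (v t) * b\<^sup>2 - sin x * sin (v t) * b2,
                      - sin x * sin (v t) * a\<^sup>2 + cos x * sin (v t) * a2 + 2 * cos x * cos (v t) * a * b - sin x * sin (v t) * b\<^sup>2 + sin x * cos (v t) * b2,
                      - cos x * a\<^sup>2 - sin x * a2] :: real^3)"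
    have Vt: "V t = vector [cos x * a * cos (v t) - sin x * sin (v t) * b, cos x * a * sin (v t) + sin x * cos (v t) * b, - sin x * a]"
      unfolding V_def x_def a_def b_def ..
    have "(V has_vector_derivative Ac) (at t)"
      unfolding V_def Ac_def x_def a_def b_def a2_def b2_def
      by (rule vec3_deriv) (auto intro!: derivative_eq_intros du[OF t] dv[OF t] ddu[OF t] ddv[OF t]
           simp: algebra_simps power2_eq_square)
    then have "(vel u v has_vector_derivative Ac) (at t)"
      by (rule has_vector_derivative_transform_within_open[OF _ assms(2) t]) (simp add: velI)
    then have accT: "acc u v t = Ac" unfolding acc_def by (rule vector_derivative_at)
    have velT: "vel u v t = V t" using velI t by blast
    have nV: "norm (vel u v t) = S"
      unfolding velT norm_eq_sqrt_inner Vt alg_vec(1) Sdef x_def ..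
    have cT: "curve u v t = Psi x (v t)" unfolding curve_def x_def ..
    have curv: "curvature u v t = (b * sin x * a2 - (sin x)\<^sup>2 * cos x * b^3 - 2 * a\<^sup>2 * b * cos x - a * sin x * b2) / S^3"
      unfolding curvature_def unit_normal_def nV unfolding accT cT velT Vt Ac_def alg_vec(2) inner_scaleR_right
      using S by (simp add: power2_eq_square power3_eq_cube)
    have un: "unit_normal u v t \<bullet> xi_coord (u t) (v t) = b * sin x / S"
      unfolding unit_normal_def nV unfolding cT velT Vt x_def[symmetric] inner_scaleR_left alg_vec(3) by simp
    show ?thesis unfolding A B curv un unfolding x_def[symmetric]
      by (rule alg_main[OF x(1) x(2) p S SS refl refl])
  qed
  show ?thesis unfolding alpha_stationary_def using key by blast
qed

end
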